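(* Let $k\ge r\ge3$ and $m,m'\ge 0$ be integers, and let $\pi\in\mathbb{C}_{=}(k,r|m)$. Then $\pi\in\mathbb{C}_{<}(k,r|m')$ if and only if $m<m'$.
   Context: A partition $\pi=(\pi_1,\dots,\pi_\ell)$ is a finite non-increasing sequence of positive integers; "$a$ occurs in $\pi$" means $a=\pi_i$ for some $i$. Göllnitz–Gordon marking: $GG(\pi)$ assigns a positive integer (mark) to each part, processing the parts from smallest to largest; $\pi_i$ receives the smallest positive integer different from the marks of all parts $\pi_g$ with $g>i$ and $\pi_i-\pi_g\le 2$, where $\pi_i-\pi_g<2$ is required when $\pi_i$ is odd. An "$r$-marked part $a$" is a part equal to $a$ with mark $r$. $N_i(\pi)$ is the number of parts with mark $i$; $\pi^{(i)}_1\ge\dots\ge\pi^{(i)}_{N_i(\pi)}$ are the parts with mark $i$, with $\pi^{(i)}_0=+\infty$, $\pi^{(i)}_{N_i(\pi)+1}=-\infty$. $\mathbb{C}(k,r)$: partitions with (i) no odd part repeated; (ii) $\pi_i\ge\pi_{i+k-1}+2$ for $1\le i\le\ell-k+1$, strict if $\pi_i$ even; (iii) at most $r-1$ parts $\le 2$. Starting types: for $\pi\in\mathbb{C}(k,r)$ with $N_2=N_2(\pi)\ge1$, let $l$ be the largest integer in $\{0,\dots,N_2\}$ such that no odd part of $\pi$ is $\ge\pi^{(2)}_l$; for $l<i\le N_2$, $\pi^{(2)}_i$ has type $s_{-1}$. For $b=1,\dots,l$ in increasing order, type and auxiliary $\sigma_b$: for $b=1$: Case 1: 1-marked part $\pi^{(2)}_1-1$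 exists and $\pi^{(2)}_1+2$ does not occur: type $s_0$, $\sigma_1=\pi^{(2)}_1-1$; Case 2: 1-marked $\pi^{(2)}_1-2$ exists and $\pi^{(2)}_1+2$ does not occur: type $s_1$, $\sigma_1=\pi^{(2)}_1-2$; Case 3: 1-marked $\pi^{(2)}_1+2$ exists: type $s_2$, $\sigma_1=\pi^{(2)}_1+2$; Case 4: 1-marked $\pi^{(2)}_1$ exists: type $s_3$, $\sigma_1=\pi^{(2)}_1$. For $2\le b\le l$: Case 1: 1-marked $\pi^{(2)}_b-1$ exists and, if a 1-marked $\pi^{(2)}_b+2$ exists, $\sigma_{b-1}=\pi^{(2)}_b+2$: type $s_0$, $\sigma_b=\pi^{(2)}_b-1$; Case 2: same with $\pi^{(2)}_b-2$: type $s_1$, $\sigma_b=\pi^{(2)}_b-2$; Case 3: 1-marked $\pi^{(2)}_b+2$ exists and $\sigma_{b-1}\ne\pi^{(2)}_b+2$: type $s_2$, $\sigma_b=\pi^{(2)}_b+2$; Case 4: 1-marked $\pi^{(2)}_b$ exists: type $s_3$, $\sigma_b=\pi^{(2)}_b$. $\mathbb{C}_{<}(k,r|p,t)$ (for $p,t\ge0$): the set of $\pi\in\mathbb{C}(k,r)$ such that (1) no odd part is $\ge 2t+1$; (2) $\pi^{(2)}_{p+1}<2t+1<\pi^{(2)}_p$ (in particular $p\le N_2(\pi)$); (3) if $\pi^{(2)}_p=2t+2$ then it is of starting type $s_2$ or $s_3$; (4) if $\pi^{(2)}_{p+1}=2t$ then it is of starting type $s_0$ or $s_1$. $\mathbb{C}_{=}(k,r|p,t)$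 (for $p,t\ge0$): the set of $\pi\in\mathbb{C}(k,r)$ such that (1) the largest odd part is $2t+1$; (2) the mark of $2t+1$ in $GG(\pi)$ is at most $2$; (3) $\pi^{(2)}_p\ge 2t+2$ and $\pi^{(2)}_{p+1}\le 2t+2$; (4) if there is a 2-marked part $2t+2$ of starting type $s_0$, then $\pi^{(2)}_{p+1}=2t+2$ and there exists $1\le i\le p+1$ with $\pi^{(2)}_i=\pi^{(2)}_{p+1}+4(p-i+1)$ and $\pi^{(2)}_i$ occurring exactly once in $\pi$; (5) if there is a 2-marked part $2t+2$ of starting type $s_2$, then $\pi^{(2)}_p=2t+2$; (6) if $2t+2$ occurs in $\pi$ and there is no 2-marked part $2t+2$, then $\pi^{(2)}_p=2t+4$, it is of starting type $s_3$, and there exists $1\le i\le p$ with $\pi^{(2)}_i=\pi^{(2)}_p+4(p-i)$ such that $\pi^{(2)}_i+2$ does not occur in $\pi$. For $m\ge0$: $\mathbb{C}_{<}(k,r|m)=\bigcup_{p+t=m}\mathbb{C}_{<}(k,r|p,t)$ and $\mathbb{C}_{=}(k,r|m)=\bigcup_{p+t=m}\mathbb{C}_{=}(k,r|p,t)$, unions over integers $p,t\ge0$. *)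

theory Defs
  imports Main "HOL-Library.Extended_Real"
begin

(* A partition is a list, non-increasing, of positive integers; list index j (0-based)
   corresponds to the paper's index j+1. *)
definition is_partition :: "nat list \<Rightarrow> bool" where
  "is_partition lam \<longleftrightarrow> sorted (rev lam) \<and> (\<forall>x\<in>set lam. 0 < x)"

(* Goellnitz-Gordon marking.  gg_aux processes the parts in ascending order
   (i.e. from the smallest / largest paper index); acc holds already processed
   (part, mark) pairs. *)
fun gg_aux :: "(nat \<times> nat) list \<Rightarrow> nat list \<Rightarrow> (nat \<times> nat) list" where
  "gg_aux acc [] = acc"
| "gg_aux acc (x # xs) =
     gg_aux (acc @ [(x, LEAST r. 0 < r \<and>
                 r \<notin> {m. \<exists>y. (y, m) \<in> set acc \<and> x - y \<le> 2 \<and> (odd x \<longrightarrow> x - y < 2)})]) xs"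

definition gg_marks :: "nat list \<Rightarrow> nat list" where
  "gg_marks lam = map snd (rev (gg_aux [] (rev lam)))"

definition gg_mark :: "nat list \<Rightarrow> nat \<Rightarrow> nat" where
  "gg_mark lam j = gg_marks lam ! j"

definition marked_parts :: "nat list \<Rightarrow> nat \<Rightarrow> nat list" where
  "marked_parts lam i = [lam ! j. j \<leftarrow> [0..<length lam], gg_mark lam j = i]"

definition Nmark :: "nat list \<Rightarrow> nat \<Rightarrow> nat" where
  "Nmark lam i = length (marked_parts lam i)"

definition pm :: "nat list \<Rightarrow> nat \<Rightarrow> nat \<Rightarrow> ereal" where
  "pm lam i j = (if j = 0 then \<infinity>
                 else if j \<le> Nmark lam i then ereal (real (marked_parts lam i ! (j - 1)))
                 else -\<infinity>)"

definition one_marked :: "nat list \<Rightarrow> int \<Rightarrow> bool" where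
  "one_marked lam a \<longleftrightarrow> (\<exists>j<length lam. int (lam ! j) = a \<and> gg_mark lam j = 1)"

definition occurs :: "nat list \<Rightarrow> int \<Rightarrow> bool" where
  "occurs lam a \<longleftrightarrow> (\<exists>x\<in>set lam. int x = a)"

definition C_set :: "nat \<Rightarrow> nat \<Rightarrow> nat list set" where
  "C_set k r = {lam. is_partition lam
     \<and> (\<forall>a. odd a \<longrightarrow> count_list lam a \<le> 1)
     \<and> (\<forall>i. i + k - 1 < length lam \<longrightarrow>
            lam ! i \<ge> lam ! (i + k - 1) + 2 \<and> (even (lam ! i) \<longrightarrow> lam ! i > lam ! (i + k - 1) + 2))
     \<and> length (filter (\<lambda>x. x \<le> 2) lam) \<le> r - 1}"

datatype stype = Sm1 | S0 | S1 | S2 | S3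

definition l_idx :: "nat list \<Rightarrow> nat" where
  "l_idx lam = (GREATEST l. l \<le> Nmark lam 2 \<and> (\<forall>x\<in>set lam. odd x \<longrightarrow> ereal (real x) < pm lam 2 l))"

(* type and sigma_b of pi^(2)_b for 1 <= b <= l; cases checked in the paper's order *)
fun st_aux :: "nat list \<Rightarrow> nat \<Rightarrow> (stype \<times> int) option" where
  "st_aux lam 0 = None"
| "st_aux lam (Suc b) =
    (let x = int (marked_parts lam 2 ! b) in
     if b = 0 then
       (if one_marked lam (x - 1) \<and> \<not> occurs lam (x + 2) then Some (S0, x - 1)
        else if one_marked lam (x - 2) \<and> \<not> occurs lam (x + 2) then Some (S1, x - 2)
        else if one_marked lam (x + 2) then Some (S2, x + 2)
        else if one_marked lam x then Some (S3, x)
        else None)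
     else
       (case st_aux lam b of
          None \<Rightarrow> None
        | Some (_, s) \<Rightarrow>
           (if one_marked lam (x - 1) \<and> (one_marked lam (x + 2) \<longrightarrow> s = x + 2) then Some (S0, x - 1)
            else if one_marked lam (x - 2) \<and> (one_marked lam (x + 2) \<longrightarrow> s = x + 2) then Some (S1, x - 2)
            else if one_marked lam (x + 2) \<and> s \<noteq> x + 2 then Some (S2, x + 2)
            else if one_marked lam x then Some (S3, x)
            else None)))"

definition start_type :: "nat list \<Rightarrow> nat \<Rightarrow> stype option" where
  "start_type lam b =
     (if 1 \<le> b \<and> b \<le> l_idx lam then map_option fst (st_aux lam b)
      else if l_idx lam < b \<and> b \<le> Nmark lam 2 then Some Sm1
      else None)"

definition C_lt :: "nat \<Rightarrow> nat \<Rightarrow> nat \<Rightarrow> nat \<Rightarrow> nat list set" where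
  "C_lt k r p t = {lam. lam \<in> C_set k r
     \<and> (\<forall>x\<in>set lam. odd x \<longrightarrow> x < 2*t+1)
     \<and> pm lam 2 (p+1) < ereal (real (2*t+1)) \<and> ereal (real (2*t+1)) < pm lam 2 p
     \<and> (pm lam 2 p = ereal (real (2*t+2)) \<longrightarrow> start_type lam p \<in> {Some S2, Some S3})
     \<and> (pm lam 2 (p+1) = ereal (real (2*t)) \<longrightarrow> start_type lam (p+1) \<in> {Some S0, Some S1})}"

definition C_eq :: "nat \<Rightarrow> nat \<Rightarrow> nat \<Rightarrow> nat \<Rightarrow> nat list set" where
  "C_eq k r p t = {lam. lam \<in> C_set k r
     \<and> (2*t+1) \<in> set lam \<and> (\<forall>x\<in>set lam. odd x \<longrightarrow> x \<le> 2*t+1)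
     \<and> (\<forall>j<length lam. lam ! j = 2*t+1 \<longrightarrow> gg_mark lam j \<le> 2)
     \<and> pm lam 2 p \<ge> ereal (real (2*t+2)) \<and> pm lam 2 (p+1) \<le> ereal (real (2*t+2))
     \<and> ((\<exists>b. 1 \<le> b \<and> b \<le> Nmark lam 2 \<and> pm lam 2 b = ereal (real (2*t+2)) \<and> start_type lam b = Some S0) \<longrightarrow>
          pm lam 2 (p+1) = ereal (real (2*t+2)) \<and>
          (\<exists>i v. 1 \<le> i \<and> i \<le> p+1 \<and> pm lam 2 i = ereal (real v) \<and>
                 pm lam 2 i = pm lam 2 (p+1) + ereal (4 * (real p - real i + 1)) \<and>
                 count_list lam v = 1))
     \<and> ((\<exists>b. 1 \<le> b \<and> b \<le> Nmark lam 2 \<and> pm lam 2 b = ereal (real (2*t+2)) \<and> start_type lam b = Some S2) \<longrightarrow>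
          pm lam 2 p = ereal (real (2*t+2)))
     \<and> ((2*t+2) \<in> set lam \<and> \<not> (\<exists>b. 1 \<le> b \<and> b \<le> Nmark lam 2 \<and> pm lam 2 b = ereal (real (2*t+2))) \<longrightarrow>
          pm lam 2 p = ereal (real (2*t+4)) \<and> start_type lam p = Some S3 \<and>
          (\<exists>i v. 1 \<le> i \<and> i \<le> p \<and> pm lam 2 i = ereal (real v) \<and>
                 pm lam 2 i = pm lam 2 p + ereal (4 * (real p - real i)) \<and>
                 (v + 2) \<notin> set lam))}"

definition C_lt_m :: "nat \<Rightarrow> nat \<Rightarrow> nat \<Rightarrow> nat list set" where
  "C_lt_m k r m = (\<Union>p\<in>{0..m}. C_lt k r p (m - p))"

definition C_eq_m :: "nat \<Rightarrow> nat \<Rightarrow> nat \<Rightarrow> nat list set" where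
  "C_eq_m k r m = (\<Union>p\<in>{0..m}. C_eq k r p (m - p))"

end

theory Submission
  imports Defs
begin


definition Fm :: "(nat \<times> nat) list \<Rightarrow> nat \<Rightarrow> nat" where
  "Fm acc x = (LEAST r. 0 < r \<and> r \<notin> {m. \<exists>y. (y, m) \<in> set acc \<and> x - y \<le> 2 \<and> (odd x \<longrightarrow> x - y < 2)})"

lemma gg_aux_Cons: "gg_aux acc (x # xs) = gg_aux (acc @ [(x, Fm acc x)]) xs"
  by (simp add: Fm_def)

declare gg_aux.simps(2)[simp del]

lemma gg_aux_len: "length (gg_aux acc xs) = length acc + length xs"
  by (induction xs arbitrary: acc) (auto simp: gg_aux_Cons)

lemma gg_aux_prefix: "take (length acc) (gg_aux acc xs) = acc"
proof (induction xs arbitrary: acc)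
  case Nil then show ?case by simp
next
  case (Cons x xs)
  have "take (length (acc @ [(x, Fm acc x)])) (gg_aux (acc @ [(x, Fm acc x)]) xs) = acc @ [(x, Fm acc x)]"
    by (rule Cons.IH)
  then have "take (length acc) (take (length (acc @ [(x, Fm acc x)])) (gg_aux (acc @ [(x, Fm acc x)]) xs)) = acc"
    by simp
  then show ?case by (simp add: gg_aux_Cons min_def)
qed

lemma gg_aux_nth:
  "length acc \<le> i \<Longrightarrow> i < length acc + length xs \<Longrightarrow>
   gg_aux acc xs ! i = (xs ! (i - length acc), Fm (take i (gg_aux acc xs)) (xs ! (i - length acc)))"
proof (induction xs arbitrary: acc)
  case Nil then show ?case by simp
next
  case (Cons x xs)
  show ?case
  proof (cases "i = length acc")
    case True
    have t: "take (Suc (length acc)) (gg_aux (acc @ [(x, Fm acc x)]) xs) = acc @ [(x, Fm acc x)]"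
      using gg_aux_prefix[of "acc @ [(x, Fm acc x)]" xs] by simp
    have "gg_aux acc (x # xs) ! i = (take (Suc (length acc)) (gg_aux (acc @ [(x, Fm acc x)]) xs)) ! i"
      using True by (simp add: gg_aux_Cons)
    also have "\<dots> = (x, Fm acc x)" using t True by simp
    finally have 1: "gg_aux acc (x # xs) ! i = (x, Fm acc x)" .
    have 2: "take i (gg_aux acc (x # xs)) = acc"
      using True gg_aux_prefix[of acc "x#xs"] by simp
    show ?thesis using 1 2 True by simp
  next
    case False
    then have "length (acc @ [(x, Fm acc x)]) \<le> i" using Cons.prems by simp
    from Cons.IH[OF this] Cons.prems False show ?thesis
      by (simp add: gg_aux_Cons Suc_diff_Suc)
  qed
qed

lemma gg_mark_char:
  assumes j: "j < length lam"
  shows "gg_mark lam j = (LEAST r. 0 < r \<and> r \<notin> {gg_mark lam g | g. j < g \<and> g < length lam \<and>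
            lam ! j - lam ! g \<le> 2 \<and> (odd (lam ! j) \<longrightarrow> lam ! j - lam ! g < 2)})"
proof -
  define n where "n = length lam"
  define out where "out = gg_aux [] (rev lam)"
  have lo: "length out = n" by (simp add: out_def gg_aux_len n_def)
  have outn: "i < n \<Longrightarrow> out ! i = (lam ! (n - Suc i), Fm (take i out) (lam ! (n - Suc i)))" for i
    using gg_aux_nth[of "[]" i "rev lam"] by (simp add: out_def n_def rev_nth)
  have gm: "g < n \<Longrightarrow> gg_mark lam g = snd (out ! (n - Suc g))" for g
    by (simp add: gg_mark_def gg_marks_def out_def[symmetric] rev_nth lo)
  have fo: "i < n \<Longrightarrow> out ! i = (lam ! (n - Suc i), gg_mark lam (n - Suc i))" for i
  proof -
    assume i: "i < n"
    have e: "n - Suc (n - Suc i) = i" using i by simp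
    have "gg_mark lam (n - Suc i) = snd (out ! i)" using gm[of "n - Suc i"] i e by simp
    then show ?thesis using outn[OF i] by (simp add: prod_eq_iff)
  qed
  have st: "set (take (n - Suc j) out) = {(lam ! g, gg_mark lam g) | g. j < g \<and> g < n}"
  proof (rule set_eqI, rule iffI)
    fix z assume "z \<in> set (take (n - Suc j) out)"
    then obtain i where i: "i < n - Suc j" "z = out ! i" by (auto simp: in_set_conv_nth lo)
    then show "z \<in> {(lam ! g, gg_mark lam g) | g. j < g \<and> g < n}"
      using fo[of i] by (intro CollectI exI[of _ "n - Suc i"]) auto
  next
    fix z assume "z \<in> {(lam ! g, gg_mark lam g) | g. j < g \<and> g < n}"
    then obtain g where g: "j < g" "g < n" "z = (lam ! g, gg_mark lam g)" by auto
    then have "out ! (n - Suc g) = z" using fo[of "n - Suc g"] by (simp add: Suc_diff_Suc)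
    moreover have "n - Suc g < n - Suc j" using g by simp
    ultimately show "z \<in> set (take (n - Suc j) out)"
      using lo nth_mem[of "n - Suc g" "take (n - Suc j) out"] by simp
  qed
  have "gg_mark lam j = Fm (take (n - Suc j) out) (lam ! j)"
    using gm[of j] outn[of "n - Suc j"] j by (simp add: n_def Suc_diff_Suc)
  also have "\<dots> = (LEAST r. 0 < r \<and> r \<notin> {gg_mark lam g | g. j < g \<and> g < length lam \<and>
            lam ! j - lam ! g \<le> 2 \<and> (odd (lam ! j) \<longrightarrow> lam ! j - lam ! g < 2)})"
    unfolding Fm_def n_def[symmetric] st by (rule arg_cong[where f=Least]) blast
  finally show ?thesis .
qed


lemma gg_mark_exists:
  assumes "j < length lam"
  shows "\<exists>r. 0 < r \<and> r \<notin> {gg_mark lam g | g. j < g \<and> g < length lam \<and>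
            lam ! j - lam ! g \<le> 2 \<and> (odd (lam ! j) \<longrightarrow> lam ! j - lam ! g < 2)}"
proof -
  have "finite ({gg_mark lam g | g. j < g \<and> g < length lam \<and>
            lam ! j - lam ! g \<le> 2 \<and> (odd (lam ! j) \<longrightarrow> lam ! j - lam ! g < 2)} \<union> {0})"
  proof (rule finite_UnI)
    show "finite {gg_mark lam g | g. j < g \<and> g < length lam \<and>
            lam ! j - lam ! g \<le> 2 \<and> (odd (lam ! j) \<longrightarrow> lam ! j - lam ! g < 2)}"
      by (rule finite_subset[of _ "gg_mark lam ` {..<length lam}"]) auto
  qed simp
  from ex_new_if_finite[OF infinite_UNIV_nat this] show ?thesis by auto
qed
lemma GG1: assumes j: "j < length lam" shows "0 < gg_mark lam j"
  using LeastI_ex[OF gg_mark_exists[OF j]] unfolding gg_mark_char[OF j, symmetric] by simp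

lemma GG2:
  assumes "j < g" "g < length lam" "lam ! j - lam ! g \<le> 2" "odd (lam ! j) \<longrightarrow> lam ! j - lam ! g < 2"
  shows "gg_mark lam g \<noteq> gg_mark lam j"
proof -
  have j: "j < length lam" using assms by simp
  have "gg_mark lam j \<notin> {gg_mark lam g | g. j < g \<and> g < length lam \<and>
            lam ! j - lam ! g \<le> 2 \<and> (odd (lam ! j) \<longrightarrow> lam ! j - lam ! g < 2)}"
    using LeastI_ex[OF gg_mark_exists[OF j]] unfolding gg_mark_char[OF j, symmetric] by (rule conjunct2)
  moreover have "gg_mark lam g \<in> {gg_mark lam g | g. j < g \<and> g < length lam \<and>
            lam ! j - lam ! g \<le> 2 \<and> (odd (lam ! j) \<longrightarrow> lam ! j - lam ! g < 2)}"
    using assms by blast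
  ultimately show ?thesis by metis
qed

lemma GG3:
  assumes j: "j < length lam" and ne: "gg_mark lam j \<noteq> 1"
  shows "\<exists>g. j < g \<and> g < length lam \<and> lam ! j - lam ! g \<le> 2 \<and> gg_mark lam g = 1"
proof (rule ccontr)
  assume a: "\<not> ?thesis"
  define S where "S = {gg_mark lam g | g. j < g \<and> g < length lam \<and>
            lam ! j - lam ! g \<le> 2 \<and> (odd (lam ! j) \<longrightarrow> lam ! j - lam ! g < 2)}"
  have "1 \<notin> S"
  proof
    assume "1 \<in> S"
    then have "\<exists>g. 1 = gg_mark lam g \<and> j < g \<and> g < length lam \<and> lam ! j - lam ! g \<le> 2 \<and> (odd (lam ! j) \<longrightarrow> lam ! j - lam ! g < 2)"
      unfolding S_def by (simp only: mem_Collect_eq)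
    then show False using a by metis
  qed
  then have "(LEAST r. 0 < r \<and> r \<notin> S) \<le> 1" by (intro Least_le) simp
  moreover have eq: "gg_mark lam j = (LEAST r. 0 < r \<and> r \<notin> S)" unfolding S_def by (rule gg_mark_char[OF j])
  ultimately have "gg_mark lam j \<le> 1" by (simp only:)
  then show False using GG1[OF j] ne by simp
qed

lemma part_mono: "is_partition lam \<Longrightarrow> i \<le> j \<Longrightarrow> j < length lam \<Longrightarrow> lam ! j \<le> lam ! i"
  unfolding is_partition_def using sorted_rev_nth_mono by blast

lemma MP_set: "x \<in> set (marked_parts lam i) \<longleftrightarrow> (\<exists>j<length lam. lam ! j = x \<and> gg_mark lam j = i)"
  unfolding marked_parts_def by auto

lemma concat_if_map: "concat (map (\<lambda>j. if P j then [f j] else []) ys) = map f (filter P ys)"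
  by (induction ys) auto

lemma MP_eq: "marked_parts lam i = map (nth lam) (filter (\<lambda>j. gg_mark lam j = i) [0..<length lam])"
  unfolding marked_parts_def by (simp add: concat_if_map)



lemma sorted_wrt_filter_upt:
  assumes "\<And>j g. j < g \<Longrightarrow> g < n \<Longrightarrow> P j \<Longrightarrow> P g \<Longrightarrow> R j g"
  shows "sorted_wrt R (filter P [0..<n])"
  using assms
proof (induction n)
  case 0 then show ?case by simp
next
  case (Suc n)
  have "sorted_wrt R (filter P [0..<n])" using Suc by simp
  then show ?case using Suc.prems by (auto simp: sorted_wrt_append)
qed

lemma MP_sorted:
  assumes part: "is_partition lam"
  shows "sorted_wrt (\<lambda>x y. y < x \<and> (even x \<longrightarrow> y + 2 < x)) (marked_parts lam 2)"
  unfolding MP_eq sorted_wrt_map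
proof (rule sorted_wrt_filter_upt)
  fix j g assume a: "j < g" "g < length lam" "gg_mark lam j = 2" "gg_mark lam g = 2"
  have le: "lam ! g \<le> lam ! j" using part_mono[OF part, of j g] a by simp
  have n: "\<not> (lam ! j - lam ! g \<le> 2 \<and> (odd (lam ! j) \<longrightarrow> lam ! j - lam ! g < 2))"
  proof
    assume h: "lam ! j - lam ! g \<le> 2 \<and> (odd (lam ! j) \<longrightarrow> lam ! j - lam ! g < 2)"
    then have "gg_mark lam g \<noteq> gg_mark lam j" using GG2[OF a(1) a(2)] by blast
    then show False using a(3,4) by simp
  qed
  show "lam ! g < lam ! j \<and> (even (lam ! j) \<longrightarrow> lam ! g + 2 < lam ! j)"
  proof (cases "even (lam ! j)")
    case True
    then have "\<not> lam ! j - lam ! g \<le> 2" using n by simp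
    then have "lam ! g + 2 < lam ! j" using le by linarith
    then show ?thesis using True by simp
  next
    case False
    then have "\<not> lam ! j - lam ! g < 2" using n by auto
    then have "lam ! g < lam ! j" using le by linarith
    then show ?thesis using False by simp
  qed
qed

lemma Pchar:
  fixes xs :: "nat list"
  assumes "sorted_wrt (\<lambda>x y. y < x) xs" "i < length xs"
  shows "(v < xs ! i) \<longleftrightarrow> i < length (filter (\<lambda>x. v < x) xs)"
  using assms
proof (induction xs arbitrary: i)
  case Nil then show ?case by simp
next
  case (Cons a xs)
  show ?case
  proof (cases "v < a")
    case True
    then show ?thesis using Cons by (cases i) auto
  next
    case False
    have all: "\<forall>x\<in>set xs. x < a" using Cons.prems(1) by simp
    have "\<forall>x\<in>set (a # xs). \<not> v < x" using all False by (auto dest: less_trans)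
    then have "filter (\<lambda>x. v < x) (a # xs) = []" by (simp add: filter_empty_conv)
    moreover have "\<not> v < (a # xs) ! i" using False Cons.prems
      by (cases i) (auto, metis less_trans nth_mem not_less_iff_gr_or_eq)
    ultimately show ?thesis by simp
  qed
qed

lemma spacing:
  assumes srt: "sorted_wrt (\<lambda>x y. y < x \<and> (even x \<longrightarrow> y + 2 < x)) xs"
    and ev: "\<forall>c<length xs. V \<le> xs ! c \<longrightarrow> even (xs ! c)"
    and k: "k < length xs" "V \<le> xs ! k"
  shows "i \<le> k \<Longrightarrow> xs ! k + 3 * (k - i) \<le> xs ! i"
proof (induction "k - i" arbitrary: i)
  case 0 then show ?case by simp
next
  case (Suc d)
  then have i: "i < k" by simp
  have IH: "xs ! k + 3 * (k - Suc i) \<le> xs ! Suc i" using Suc i by simp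
  have "V \<le> xs ! Suc i" using IH k by simp
  moreover have r: "xs ! Suc i < xs ! i \<and> (even (xs ! i) \<longrightarrow> xs ! Suc i + 2 < xs ! i)"
    using sorted_wrt_nth_less[OF srt, of i "Suc i"] i k by simp
  ultimately have "even (xs ! i)" using ev i k by (metis less_trans le_less_trans less_imp_le)
  then have "xs ! Suc i + 3 \<le> xs ! i" using r by simp
  then show ?case using IH i by simp
qed

lemma pm_pos: "1 \<le> j \<Longrightarrow> j \<le> length (marked_parts lam 2) \<Longrightarrow>
   pm lam 2 j = ereal (real (marked_parts lam 2 ! (j - 1)))"
  by (simp add: pm_def Nmark_def)

lemma pm_big: "length (marked_parts lam 2) < j \<Longrightarrow> pm lam 2 j = -\<infinity>"
  by (simp add: pm_def Nmark_def)

lemma pm_0: "pm lam 2 0 = \<infinity>"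
  by (simp add: pm_def)

lemma l_idx_ge:
  assumes "1 \<le> b" "b \<le> length (marked_parts lam 2)"
    "\<forall>x\<in>set lam. odd x \<longrightarrow> x < marked_parts lam 2 ! (b - 1)"
  shows "b \<le> l_idx lam"
  unfolding l_idx_def
proof (rule Greatest_le_nat[where b = "Nmark lam 2"])
  show "b \<le> Nmark lam 2 \<and> (\<forall>x\<in>set lam. odd x \<longrightarrow> ereal (real x) < pm lam 2 b)"
    using assms by (simp add: pm_pos Nmark_def)
qed simp

lemma start_type_eq:
  assumes "1 \<le> b" "b \<le> length (marked_parts lam 2)"
    "\<forall>x\<in>set lam. odd x \<longrightarrow> x < marked_parts lam 2 ! (b - 1)"
  shows "start_type lam b = map_option fst (st_aux lam b)"
  using l_idx_ge[OF assms] assms(1) by (simp add: start_type_def)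

lemma one_marked_occurs: "one_marked lam a \<Longrightarrow> occurs lam a"
  unfolding one_marked_def occurs_def by auto

lemma T0:
  assumes part: "is_partition lam" and j: "j < length lam" "gg_mark lam j = 2"
  shows "one_marked lam (int (lam ! j)) \<or> one_marked lam (int (lam ! j) - 1) \<or> one_marked lam (int (lam ! j) - 2)"
proof -
  obtain g where g: "j < g" "g < length lam" "lam ! j - lam ! g \<le> 2" "gg_mark lam g = 1"
    using GG3[OF j(1)] j(2) by auto
  have "lam ! g \<le> lam ! j" using part_mono[OF part, of j g] g by simp
  then have "int (lam ! g) = int (lam ! j) \<or> int (lam ! g) = int (lam ! j) - 1 \<or> int (lam ! g) = int (lam ! j) - 2"
    using g(3) by linarith
  then show ?thesis using g unfolding one_marked_def by blast
qed

lemma T1: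
  assumes part: "is_partition lam" and nX1: "X + 1 \<notin> set lam" and occ: "occurs lam (int X + 2)"
  shows "one_marked lam (int X + 2) \<or> one_marked lam (int X)"
proof -
  define J where "J = {i. i < length lam \<and> lam ! i = X + 2}"
  have fin: "finite J" unfolding J_def by simp
  obtain x where "x \<in> set lam" "int x = int X + 2" using occ unfolding occurs_def by blast
  moreover then have "x = X + 2" by linarith
  ultimately have "X + 2 \<in> set lam" by simp
  then obtain i where "i < length lam" "lam ! i = X + 2" by (auto simp: in_set_conv_nth)
  then have ne: "J \<noteq> {}" unfolding J_def by blast
  define j' where "j' = Max J"
  have j': "j' < length lam" "lam ! j' = X + 2" using Max_in[OF fin ne] unfolding j'_def J_def by auto
  show ?thesis
  proof (cases "gg_mark lam j' = 1")
    case True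
    then show ?thesis using j' unfolding one_marked_def by force
  next
    case False
    obtain g where g: "j' < g" "g < length lam" "lam ! j' - lam ! g \<le> 2" "gg_mark lam g = 1"
      using GG3[OF j'(1) False] by auto
    have le: "lam ! g \<le> X + 2" using part_mono[OF part, of j' g] g j' by simp
    have "lam ! g \<noteq> X + 2"
    proof
      assume "lam ! g = X + 2"
      then have "g \<in> J" using g unfolding J_def by simp
      then have "g \<le> j'" unfolding j'_def using fin by simp
      then show False using g by simp
    qed
    moreover have "lam ! g \<noteq> X + 1" using nX1 g(2) nth_mem by metis
    ultimately have "lam ! g = X" using le g(3) j' by linarith
    then show ?thesis using g unfolding one_marked_def by force
  qed
qed

lemma st_aux_not_Sm1: "st_aux lam b \<noteq> Some (Sm1, s)"
  by (induction b) (auto simp: Let_def split: option.splits)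

lemma st_case:
  assumes st: "st_aux lam (Suc b) = Some (ty, s)"
    and om1: "one_marked lam (int (marked_parts lam 2 ! b) - 1)"
    and nom: "\<not> one_marked lam (int (marked_parts lam 2 ! b))"
  shows "ty = S0 \<or> ty = S2"
proof (cases "b = 0")
  case True
  have "one_marked lam (int (marked_parts lam 2 ! b) + 2) \<Longrightarrow> occurs lam (int (marked_parts lam 2 ! b) + 2)"
    by (rule one_marked_occurs)
  then show ?thesis using st om1 nom True by (auto simp: Let_def split: if_splits)
next
  case False
  then show ?thesis using st om1 nom by (auto simp: Let_def split: if_splits option.splits)
qed

lemma st_aux_some:
  assumes part: "is_partition lam"
  shows "b < length (marked_parts lam 2) \<Longrightarrow> \<forall>x\<in>set lam. odd x \<longrightarrow> x < marked_parts lam 2 ! b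
     \<Longrightarrow> st_aux lam (Suc b) \<noteq> None"
proof (induction b)
  case 0
  define X where "X = marked_parts lam 2 ! 0"
  obtain j where j: "j < length lam" "lam ! j = X" "gg_mark lam j = 2"
    using nth_mem[OF 0(1)] unfolding X_def MP_set by blast
  have Xin: "X \<in> set lam" using j nth_mem by metis
  have "even X" using 0(2) Xin X_def by auto
  then have "X + 1 \<notin> set lam" using 0(2) X_def by auto
  then have t1: "occurs lam (int X + 2) \<Longrightarrow> one_marked lam (int X + 2) \<or> one_marked lam (int X)"
    using T1[OF part] by blast
  have t0: "one_marked lam (int X) \<or> one_marked lam (int X - 1) \<or> one_marked lam (int X - 2)"
    using T0[OF part j(1) j(3)] j(2) by simp
  have om: "one_marked lam (int X + 2) \<Longrightarrow> occurs lam (int X + 2)" by (rule one_marked_occurs)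
  show ?case using t0 t1 om unfolding X_def by (auto simp: Let_def)
next
  case (Suc b)
  define X where "X = marked_parts lam 2 ! Suc b"
  obtain j where j: "j < length lam" "lam ! j = X" "gg_mark lam j = 2"
    using nth_mem[OF Suc(2)] unfolding X_def MP_set by blast
  have t0: "one_marked lam (int X) \<or> one_marked lam (int X - 1) \<or> one_marked lam (int X - 2)"
    using T0[OF part j(1) j(3)] j(2) by simp
  have "marked_parts lam 2 ! Suc b < marked_parts lam 2 ! b"
    using sorted_wrt_nth_less[OF MP_sorted[OF part], of b "Suc b"] Suc(2) by simp
  then have "st_aux lam (Suc b) \<noteq> None" using Suc.prems by (intro Suc.IH) auto
  then obtain ty s where st: "st_aux lam (Suc b) = Some (ty, s)" by auto
  show ?case using t0 st unfolding X_def by (auto simp: Let_def)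
qed



theorem theorem5p8:
  fixes k r m m' :: nat and lam :: "nat list"
  assumes "3 \<le> r" and "r \<le> k" and "lam \<in> C_eq_m k r m"
  shows "lam \<in> C_lt_m k r m' \<longleftrightarrow> m < m'"
proof -
  from assms(3) obtain p where pm': "p \<le> m" "lam \<in> C_eq k r p (m - p)" unfolding C_eq_m_def by auto
  define t where "t = m - p"
  have mpt: "m = p + t" using pm' t_def by simp
  have Ceq: "lam \<in> C_eq k r p t" using pm' t_def by simp
  define xs where "xs = marked_parts lam 2"
  define N where "N = length xs"
  note H = Ceq[unfolded C_eq_def mem_Collect_eq]
  have Cset: "lam \<in> C_set k r" using H by (rule conjunct1)
  have in21: "2*t+1 \<in> set lam" using H[THEN conjunct2] by (rule conjunct1)
  have oddle: "\<forall>x\<in>set lam. odd x \<longrightarrow> x \<le> 2*t+1" using H[THEN conjunct2, THEN conjunct2] by (rule conjunct1)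
  have mk21: "\<forall>j<length lam. lam ! j = 2*t+1 \<longrightarrow> gg_mark lam j \<le> 2"
    using H[THEN conjunct2, THEN conjunct2, THEN conjunct2] by (rule conjunct1)
  have e1: "pm lam 2 p \<ge> ereal (real (2*t+2))"
    using H[THEN conjunct2, THEN conjunct2, THEN conjunct2, THEN conjunct2] by (rule conjunct1)
  have e2: "pm lam 2 (p+1) \<le> ereal (real (2*t+2))"
    using H[THEN conjunct2, THEN conjunct2, THEN conjunct2, THEN conjunct2, THEN conjunct2] by (rule conjunct1)
  have e4: "(\<exists>b. 1 \<le> b \<and> b \<le> Nmark lam 2 \<and> pm lam 2 b = ereal (real (2*t+2)) \<and> start_type lam b = Some S0) \<longrightarrow>
          pm lam 2 (p+1) = ereal (real (2*t+2))"
  proof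
    assume a: "\<exists>b. 1 \<le> b \<and> b \<le> Nmark lam 2 \<and> pm lam 2 b = ereal (real (2*t+2)) \<and> start_type lam b = Some S0"
    show "pm lam 2 (p+1) = ereal (real (2*t+2))"
      using mp[OF H[THEN conjunct2, THEN conjunct2, THEN conjunct2, THEN conjunct2, THEN conjunct2, THEN conjunct2, THEN conjunct1] a]
      by (rule conjunct1)
  qed
  have e5: "(\<exists>b. 1 \<le> b \<and> b \<le> Nmark lam 2 \<and> pm lam 2 b = ereal (real (2*t+2)) \<and> start_type lam b = Some S2) \<longrightarrow>
          pm lam 2 p = ereal (real (2*t+2))"
    using H[THEN conjunct2, THEN conjunct2, THEN conjunct2, THEN conjunct2, THEN conjunct2, THEN conjunct2, THEN conjunct2, THEN conjunct1] .
  have part: "is_partition lam" using Cset unfolding C_set_def by simp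
  have srt: "sorted_wrt (\<lambda>x y. y < x \<and> (even x \<longrightarrow> y + 2 < x)) xs" using MP_sorted[OF part] xs_def by simp
  have srt1: "sorted_wrt (\<lambda>x y. y < x) xs" using srt by (rule sorted_wrt_mono_rel[rotated]) auto
  have xsin: "\<exists>j<length lam. lam ! j = xs ! c \<and> gg_mark lam j = 2" if "c < N" for c
    using nth_mem[of c xs] that unfolding N_def xs_def MP_set by blast
  have xsin': "xs ! c \<in> set lam" if "c < N" for c
    using xsin[OF that] nth_mem by metis
  have evx: "even (xs ! c)" if "c < N" "2*t+1 < xs ! c" for c
    using oddle xsin'[OF that(1)] that(2) by fastforce
  have ev: "\<forall>c<N. 2*t+2 \<le> xs ! c \<longrightarrow> even (xs ! c)" using evx by fastforce
  have NN: "Nmark lam 2 = N" by (simp add: Nmark_def N_def xs_def)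
  have pmp: "pm lam 2 j = ereal (real (xs ! (j - 1)))" if "1 \<le> j" "j \<le> N" for j
    using pm_pos[of j lam] that by (simp add: N_def xs_def)
  have pmb: "pm lam 2 j = -\<infinity>" if "N < j" for j
    using pm_big[of lam j] that by (simp add: N_def xs_def)
  have strict: "xs ! c < xs ! i" if "i < c" "c < N" for i c
    using sorted_wrt_nth_less[OF srt1 that[unfolded N_def]] .
  have mono: "xs ! c \<le> xs ! i" if "i \<le> c" "c < N" for i c
    using strict[of i c] that by (cases "i = c") auto
  have p1: "p = 0 \<or> (p \<le> N \<and> 2*t+2 \<le> xs ! (p - 1))"
  proof (cases "p = 0")
    case False
    have "p \<le> N"
    proof (rule ccontr)
      assume "\<not> p \<le> N"
      then show False using e1 pmb[of p] by simp
    qed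
    then show ?thesis using e1 pmp[of p] False by simp
  qed simp
  have p2: "xs ! p \<le> 2*t+2" if "p < N"
    using e2 pmp[of "p+1"] that by simp
  have oneA: "one_marked lam (int (2*t+1)) \<and> \<not> one_marked lam (int (2*t+2))" if A22: "2*t+2 \<in> set xs"
  proof -
    obtain c where c: "c < N" "xs ! c = 2*t+2" using A22[unfolded in_set_conv_nth] unfolding N_def by blast
    obtain j0 where j0': "j0 < length lam" "lam ! j0 = xs ! c" "gg_mark lam j0 = 2" using xsin[OF c(1)] by blast
    have j0: "j0 < length lam" "lam ! j0 = 2*t+2" "gg_mark lam j0 = 2" using j0' c(2) by simp_all
    obtain g0 where g0: "g0 < length lam" "lam ! g0 = 2*t+1" using in21[unfolded in_set_conv_nth] by blast
    have "j0 < g0"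
    proof (rule ccontr)
      assume "\<not> j0 < g0"
      then have "lam ! j0 \<le> lam ! g0" using part_mono[OF part, of g0 j0] j0 by simp
      then show False using j0 g0 by simp
    qed
    moreover have "lam ! j0 - lam ! g0 \<le> 2" "odd (lam ! j0) \<longrightarrow> lam ! j0 - lam ! g0 < 2" using j0 g0 by simp_all
    ultimately have "gg_mark lam g0 \<noteq> gg_mark lam j0" using GG2[of j0 g0 lam] g0(1) by blast
    moreover have "0 < gg_mark lam g0" using GG1[OF g0(1)] .
    moreover have "gg_mark lam g0 \<le> 2" using mk21 g0 by simp
    ultimately have m1: "gg_mark lam g0 = 1" using j0 by simp
    then have o1: "one_marked lam (int (2*t+1))" using g0 unfolding one_marked_def by (intro exI[of _ g0]) simp
    have o2: "\<not> one_marked lam (int (2*t+2))"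
    proof
      assume "one_marked lam (int (2*t+2))"
      then obtain a where a: "a < length lam" "int (lam ! a) = int (2*t+2)" "gg_mark lam a = 1"
        unfolding one_marked_def by blast
      have la: "lam ! a = 2*t+2" using a(2) by simp
      have "a < g0"
      proof (rule ccontr)
        assume "\<not> a < g0"
        then have "lam ! a \<le> lam ! g0" using part_mono[OF part, of g0 a] a by simp
        then show False using la g0 by simp
      qed
      moreover have "lam ! a - lam ! g0 \<le> 2" "odd (lam ! a) \<longrightarrow> lam ! a - lam ! g0 < 2" using la g0 by simp_all
      ultimately have "gg_mark lam g0 \<noteq> gg_mark lam a" using GG2[of a g0 lam] g0(1) by blast
      then show False using a m1 by simp
    qed
    show ?thesis using o1 o2 by simp
  qed
  have stlem: "ty = S0 \<or> ty = S2" if "b < N" "xs ! b = 2*t+2" "st_aux lam (Suc b) = Some (ty, s)" for b ty s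
  proof -
    have "2*t+2 \<in> set xs" using that nth_mem unfolding N_def by metis
    from oneA[OF this] have "one_marked lam (int (xs ! b) - 1)" "\<not> one_marked lam (int (xs ! b))"
      using that(2) by (simp_all add: algebra_simps)
    then show ?thesis using st_case[of lam b ty s] that(3) unfolding xs_def by blast
  qed
  have sta: "start_type lam b = map_option fst (st_aux lam b)" if "1 \<le> b" "b \<le> N" "2*t+1 < xs ! (b - 1)" for b
  proof (rule start_type_eq)
    show "1 \<le> b" "b \<le> length (marked_parts lam 2)" using that by (simp_all add: N_def xs_def)
    show "\<forall>x\<in>set lam. odd x \<longrightarrow> x < marked_parts lam 2 ! (b - 1)"
      using oddle that(3) unfolding xs_def by fastforce
  qed
  have stsome: "st_aux lam (Suc b) \<noteq> None" if "b < N" "2*t+1 < xs ! b" for b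
  proof (rule st_aux_some[OF part])
    show "b < length (marked_parts lam 2)" using that by (simp add: N_def xs_def)
    show "\<forall>x\<in>set lam. odd x \<longrightarrow> x < marked_parts lam 2 ! b"
      using oddle that(2) unfolding xs_def by fastforce
  qed
  show ?thesis
  proof
    assume lt: "lam \<in> C_lt_m k r m'"
    obtain p' where p': "p' \<le> m'" "lam \<in> C_lt k r p' (m' - p')" using lt unfolding C_lt_m_def by auto
    define t' where "t' = m' - p'"
    have mpt': "m' = p' + t'" using p' t'_def by simp
    note G = p'(2)[unfolded C_lt_def mem_Collect_eq, folded t'_def]
    have oddlt: "\<forall>x\<in>set lam. odd x \<longrightarrow> x < 2*t'+1" using G[THEN conjunct2] by (rule conjunct1)
    have f1: "pm lam 2 (p'+1) < ereal (real (2*t'+1))"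
      using G[THEN conjunct2, THEN conjunct2] by (rule conjunct1)
    have f4: "pm lam 2 (p'+1) = ereal (real (2*t')) \<longrightarrow> start_type lam (p'+1) \<in> {Some S0, Some S1}"
      using G[THEN conjunct2, THEN conjunct2, THEN conjunct2, THEN conjunct2] by (rule conjunct2)
    show "m < m'"
    proof (rule ccontr)
      assume nl: "\<not> m < m'"
      have tt: "t < t'" using oddlt in21 by fastforce
      have pp: "p' < p" using nl tt mpt mpt' by linarith
      then have pN: "p \<le> N" "2*t+2 \<le> xs ! (p - 1)" using p1 by auto
      have x1: "xs ! p' < 2*t'+1" using f1 pmp[of "p'+1"] pp pN by simp
      have sp: "xs ! (p - 1) + 3 * ((p - 1) - p') \<le> xs ! p'"
        using spacing[OF srt ev[unfolded N_def], of "p - 1" p'] pp pN by (simp add: N_def)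
      have pd: "p' = p - 1" "t' = t + 1" "xs ! (p - 1) = 2*t+2"
        using sp x1 pN nl tt mpt mpt' pp by linarith+
      have pmP: "pm lam 2 p = ereal (real (2*t+2))" using pmp[of p] pp pN pd by simp
      have "start_type lam p \<in> {Some S0, Some S1}"
        using f4 pmP pd pp by (simp add: algebra_simps)
      moreover have "start_type lam p = map_option fst (st_aux lam p)"
        using sta[of p] pp pN pd by simp
      ultimately obtain ty s where st: "st_aux lam (Suc (p - 1)) = Some (ty, s)" "ty = S0 \<or> ty = S1"
        using pp by (cases "st_aux lam p") auto
      have "ty = S0 \<or> ty = S2" using stlem[OF _ _ st(1)] pp pN pd by simp
      then have "ty = S0" using st(2) by auto
      then have "start_type lam p = Some S0"
        using \<open>start_type lam p = map_option fst (st_aux lam p)\<close> st(1) pp by simp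
      then have "pm lam 2 (p+1) = ereal (real (2*t+2))"
        using e4 pmP pp pN NN by auto
      moreover have "pm lam 2 (p+1) \<noteq> ereal (real (2*t+2))"
      proof (cases "p + 1 \<le> N")
        case True
        have "xs ! p < xs ! (p - 1)" using strict[of "p - 1" p] True pp by simp
        then show ?thesis using pmp[of "p+1"] True pd by simp
      next
        case False
        then show ?thesis using pmb[of "p+1"] by simp
      qed
      ultimately show False by simp
    qed
  next
    assume mm: "m < m'"
    define P where "P v = length (filter (\<lambda>x. v < x) xs)" for v
    have Pc: "(v < xs ! c) \<longleftrightarrow> c < P v" if "c < N" for c v
      using Pchar[OF srt1, of c v] that unfolding P_def N_def by simp
    have PN: "P v \<le> N" for v unfolding P_def N_def by simp
    have Pmono: "P w \<le> P v" if "v \<le> w" for v w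
    proof (rule ccontr)
      assume "\<not> P w \<le> P v"
      then have c: "P v < P w" "P v < N" using PN[of w] by auto
      then have "w < xs ! (P v)" using Pc by blast
      then have "v < xs ! (P v)" using that by simp
      then show False using Pc[OF c(2)] by simp
    qed
    have Pstr: "P w < P v" if "i < N" "v < xs ! i" "xs ! i \<le> w" for i v w
    proof -
      have "i < P v" using Pc[OF that(1)] that(2) by simp
      moreover have "\<not> i < P w" using Pc[OF that(1), of w] that(3) by simp
      ultimately show ?thesis by simp
    qed
    define g where "g u = u + P (2*u+1)" for u
    have gge: "u \<le> g u" for u unfolding g_def by simp
    have Pt1: "P (2*t+3) \<le> p"
    proof (rule ccontr)
      assume "\<not> P (2*t+3) \<le> p"
      then have c: "p < P (2*t+3)" "p < N" using PN[of "2*t+3"] by auto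
      then have "2*t+3 < xs ! p" using Pc by blast
      then show False using p2[OF c(2)] by simp
    qed
    have ex: "t+1 \<le> m' \<and> m' \<le> g m'" using mm mpt gge by auto
    define u where "u = (LEAST u. t+1 \<le> u \<and> m' \<le> g u)"
    have u1: "t+1 \<le> u" "m' \<le> g u" using LeastI[of "\<lambda>u. t+1 \<le> u \<and> m' \<le> g u", OF ex] unfolding u_def by auto
    have u2: "g u = m' \<and> (t+1 < u \<longrightarrow> 2*u \<notin> set xs)"
    proof (cases "u = t+1")
      case True
      have "2*u+1 = 2*t+3" using True by simp
      then have "g u = t+1 + P (2*t+3)" unfolding g_def using True by (simp only:)
      then show ?thesis using Pt1 u1 True mm mpt by simp
    next
      case False
      then have ut: "t+1 < u" using u1 by simp
      have "\<not> (t+1 \<le> u - 1 \<and> m' \<le> g (u - 1))"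
      proof
        assume "t+1 \<le> u - 1 \<and> m' \<le> g (u - 1)"
        then have "u \<le> u - 1" unfolding u_def by (rule Least_le)
        then show False using ut by simp
      qed
      then have gl: "g (u - 1) < m'" using ut by auto
      have e: "2*(u-1)+1 \<le> 2*u+1" by simp
      have "P (2*u+1) \<le> P (2*(u-1)+1)" by (rule Pmono[OF e])
      then have g1: "g u \<le> m'" using gl ut unfolding g_def by simp
      have "2*u \<notin> set xs"
      proof
        assume "2*u \<in> set xs"
        then obtain i where i: "i < N" "xs ! i = 2*u" unfolding N_def in_set_conv_nth by blast
        have "P (2*u+1) < P (2*(u-1)+1)" by (rule Pstr[OF i(1)]) (use i ut in simp_all)
        then have "g u \<le> g (u - 1)" using ut unfolding g_def by simp
        then show False using gl u1 by simp
      qed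
      then show ?thesis using g1 u1 by simp
    qed
    define q where "q = P (2*u+1)"
    have qu: "q + u = m'" using u2 unfolding q_def g_def by simp
    have qc: "(2*u+1 < xs ! c) \<longleftrightarrow> c < q" if "c < N" for c using Pc[OF that] unfolding q_def .
    have qN: "q \<le> N" unfolding q_def by (rule PN)
    have oddu: "\<forall>x\<in>set lam. odd x \<longrightarrow> x < 2*u+1" using oddle u1 by fastforce
    have nodd: "xs ! c \<noteq> 2*u+1" if "c < N" for c
      using oddu xsin'[OF that] by fastforce
    have lower: "pm lam 2 (q+1) < ereal (real (2*u+1))"
    proof (cases "q + 1 \<le> N")
      case True
      then have "\<not> 2*u+1 < xs ! q" using qc[of q] by simp
      moreover have "xs ! q \<noteq> 2*u+1" using nodd[of q] True by simp
      ultimately have "xs ! q < 2*u+1" by simp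
      then show ?thesis using pmp[of "q+1"] True by simp
    next
      case False
      then show ?thesis using pmb[of "q+1"] by simp
    qed
    have upper: "ereal (real (2*u+1)) < pm lam 2 q"
    proof (cases "q = 0")
      case True
      then show ?thesis using pm_0[of lam] by simp
    next
      case False
      then have "2*u+1 < xs ! (q - 1)" using qc[of "q - 1"] qN by simp
      then show ?thesis using pmp[of q] False qN by simp
    qed
    have Cs: "lam \<in> C_set k r" by (rule Cset)
    show "lam \<in> C_lt_m k r m'"
    proof (cases "2*u+2 \<in> set xs \<and> start_type lam q \<notin> {Some S2, Some S3}")
      case True
      then obtain i where i: "i < N" "xs ! i = 2*u+2" unfolding N_def in_set_conv_nth by blast
      have iq: "i < q" using qc[OF i(1)] i(2) by simp
      then have q1: "1 \<le> q" by simp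
      have xq: "xs ! (q - 1) = 2*u+2"
      proof -
        have "xs ! (q - 1) \<le> xs ! i" using mono[of i "q - 1"] iq qN by simp
        moreover have "2*u+1 < xs ! (q - 1)" using qc[of "q - 1"] q1 qN by simp
        ultimately show ?thesis using i(2) by simp
      qed
      have big: "2*u+4 < xs ! (q - 2)" if "2 \<le> q"
      proof -
        have r: "xs ! (q - 1) < xs ! (q - 2) \<and> (even (xs ! (q - 2)) \<longrightarrow> xs ! (q - 1) + 2 < xs ! (q - 2))"
          using sorted_wrt_nth_less[OF srt, of "q - 2" "q - 1"] that qN unfolding N_def by simp
        then have "even (xs ! (q - 2))" using evx[of "q - 2"] xq u1 that qN by simp
        then show ?thesis using r xq by simp
      qed
      have stq: "start_type lam q = map_option fst (st_aux lam q)"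
        using sta[of q] q1 qN xq u1 by simp
      have "st_aux lam (Suc (q - 1)) \<noteq> None"
        using stsome[of "q - 1"] q1 qN xq u1 by simp
      then obtain ty s where st: "st_aux lam q = Some (ty, s)" using q1 by (cases "st_aux lam q") auto
      have "ty \<noteq> Sm1" using st_aux_not_Sm1[of lam q s] st by auto
      moreover have "ty \<noteq> S2" "ty \<noteq> S3" using True stq st by auto
      ultimately have tyS: "start_type lam q \<in> {Some S0, Some S1}" using stq st by (cases ty) auto
      have "lam \<in> C_lt k r (q - 1) (u + 1)"
        unfolding C_lt_def mem_Collect_eq
      proof (intro conjI)
        show "lam \<in> C_set k r" by (rule Cs)
        show "\<forall>x\<in>set lam. odd x \<longrightarrow> x < 2 * (u + 1) + 1" using oddu by fastforce
        show "pm lam 2 (q - 1 + 1) < ereal (real (2 * (u + 1) + 1))"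
          using pmp[of q] q1 qN xq by simp
        show "ereal (real (2 * (u + 1) + 1)) < pm lam 2 (q - 1)"
        proof (cases "q = 1")
          case True
          then show ?thesis using pm_0[of lam] by simp
        next
          case False
          then show ?thesis using pmp[of "q - 1"] big q1 qN by (simp add: numeral_eq_Suc)
        qed
        show "pm lam 2 (q - 1) = ereal (real (2 * (u + 1) + 2)) \<longrightarrow> start_type lam (q - 1) \<in> {Some S2, Some S3}"
        proof
          assume a: "pm lam 2 (q - 1) = ereal (real (2 * (u + 1) + 2))"
          show "start_type lam (q - 1) \<in> {Some S2, Some S3}"
          proof (cases "q = 1")
            case True
            then show ?thesis using a pm_0[of lam] by simp
          next
            case False
            then have q2: "2 \<le> q" using q1 by simp
            have "q - 1 - 1 = q - 2" by simp
            then have "pm lam 2 (q - 1) = ereal (real (xs ! (q - 2)))" using pmp[of "q - 1"] q2 qN by simp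
            moreover have "xs ! (q - 2) \<noteq> 2 * (u + 1) + 2" using big[OF q2] by simp
            ultimately show ?thesis using a by simp
          qed
        qed
        show "pm lam 2 (q - 1 + 1) = ereal (real (2 * (u + 1))) \<longrightarrow> start_type lam (q - 1 + 1) \<in> {Some S0, Some S1}"
          using tyS q1 by simp
      qed
      moreover have "m' - (q - 1) = u + 1" using qu q1 by simp
      moreover have "q - 1 \<in> {0..m'}" using qu by simp
      ultimately show ?thesis unfolding C_lt_m_def by (metis UN_I)
    next
      case False
      have "lam \<in> C_lt k r q u"
        unfolding C_lt_def mem_Collect_eq
      proof (intro conjI)
        show "lam \<in> C_set k r" by (rule Cs)
        show "\<forall>x\<in>set lam. odd x \<longrightarrow> x < 2 * u + 1" by (rule oddu)
        show "pm lam 2 (q + 1) < ereal (real (2 * u + 1))" by (rule lower)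
        show "ereal (real (2 * u + 1)) < pm lam 2 q" by (rule upper)
        show "pm lam 2 q = ereal (real (2 * u + 2)) \<longrightarrow> start_type lam q \<in> {Some S2, Some S3}"
        proof
          assume a: "pm lam 2 q = ereal (real (2 * u + 2))"
          have q1: "1 \<le> q" using a pm_0[of lam] by (cases q) auto
          have "xs ! (q - 1) = 2*u+2" using a pmp[of q] q1 qN by simp
          then have "2*u+2 \<in> set xs" using nth_mem[of "q - 1" xs] q1 qN unfolding N_def by simp
          then show "start_type lam q \<in> {Some S2, Some S3}" using False by simp
        qed
        show "pm lam 2 (q + 1) = ereal (real (2 * u)) \<longrightarrow> start_type lam (q + 1) \<in> {Some S0, Some S1}"
        proof
          assume a: "pm lam 2 (q + 1) = ereal (real (2 * u))"
          have qN1: "q + 1 \<le> N"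
          proof (rule ccontr)
            assume "\<not> q + 1 \<le> N"
            then show False using a pmb[of "q+1"] by simp
          qed
          have xq: "xs ! q = 2*u" using a pmp[of "q+1"] qN1 by simp
          then have "2*u \<in> set xs" using nth_mem[of q xs] qN1 unfolding N_def by simp
          then have ut: "u = t + 1" using u1 u2 by fastforce
          have "2*u+1 = 2*t+3" using ut by simp
          then have "q = P (2*t+3)" unfolding q_def by (simp only:)
          then have qp: "q = p" using Pt1 qu mm mpt ut by linarith
          have xq2: "xs ! q = 2*t+2" using xq ut by simp
          have sq: "start_type lam (q + 1) = map_option fst (st_aux lam (q + 1))"
            using sta[of "q+1"] qN1 xq2 by simp
          have "st_aux lam (Suc q) \<noteq> None" using stsome[of q] qN1 xq2 by simp
          then obtain ty s where st: "st_aux lam (Suc q) = Some (ty, s)" by auto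
          have "ty = S0 \<or> ty = S2" using stlem[OF _ xq2 st] qN1 by simp
          moreover have "ty \<noteq> S2"
          proof
            assume "ty = S2"
            then have "start_type lam (q + 1) = Some S2" using sq st by simp
            then have "pm lam 2 p = ereal (real (2*t+2))"
              using e5 a ut qN1 NN by auto
            moreover have "pm lam 2 p \<noteq> ereal (real (2*t+2))"
            proof (cases "p = 0")
              case True
              then show ?thesis using pm_0[of lam] by simp
            next
              case False
              have "xs ! q < xs ! (q - 1)" using strict[of "q - 1" q] qN1 False qp by simp
              then show ?thesis using pmp[of p] False qp qN1 xq2 by simp
            qed
            ultimately show False by simp
          qed
          ultimately have "ty = S0" by simp
          then show "start_type lam (q + 1) \<in> {Some S0, Some S1}" using sq st by simp
        qed
      qed
      moreover have "m' - q = u" using qu by simp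
      moreover have "q \<in> {0..m'}" using qu by simp
      ultimately show ?thesis unfolding C_lt_m_def by (metis UN_I)
    qed
  qed
qed


end
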